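(* Let $\mathcal{I}$ be an instance of $\mathrm{CSP}(\{r_1,r_2\})$ for basic Allen relations $r_1,r_2$, and let $G_\mathcal{I}$ be its arc-labelled graph. Then $\mathcal{I}$ is satisfiable if and only if $G_\mathcal{I}$ contains no bad cycle, where the bad cycles are as follows. (1) If $r_1=\mathsf{d}$ and $r_2=\mathsf{p}$: cycles in which all $\mathsf{p}$-arcs have the same direction and no two $\mathsf{d}$-arcs meet head-to-head. (2) If $r_1=\mathsf{d}$ and $r_2=\mathsf{o}$: cycles in which all $\mathsf{d}$-arcs have the same direction and all $\mathsf{o}$-arcs have the same direction (the common direction of the $\mathsf{d}$-arcs may differ from that of the $\mathsf{o}$-arcs). (3) If $r_1=\mathsf{o}$ and $r_2=\mathsf{p}$: (a) directed cycles of $\mathsf{o}$-arcs, and (b) cycles containing at least one $\mathsf{p}$-arc, in which (for a suitable traversal direction) all $\mathsf{p}$-arcs are forward and between any two $\mathsf{o}$-arcs in reverse direction that are consecutive among the reverse $\mathsf{o}$-arcs along the cycle there is a $\mathsf{p}$-arc (this includes directed cycles of $\mathsf{p}$-arcs). (4) If $r_1\in\{\mathsf{f},\mathsf{s}\}$ and $r_2\in\{\mathsf{d},\mathsf{o},\mathsf{p}\}$: (a) directed cycles of $r_1$-arcs, and (b) cycles with at least one $r_2$-arc in which all $r_2$-arcs have the same direction (the $r_1$-arcs may be directed arbitrarily).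
   Context: Allen's interval algebra has domain $\mathbb{I}=\{[a,b] : a,b\in\mathbb{Q},\ a<b\}$; for $I=[a,b]$ write $I^-=a$, $I^+=b$. Basic relations: $x\,\mathsf{p}\,y$ iff $x^+<y^-$; $x\,\mathsf{o}\,y$ iff $x^-<y^-<x^+<y^+$; $x\,\mathsf{d}\,y$ iff $y^-<x^-$ and $x^+<y^+$; $x\,\mathsf{s}\,y$ iff $x^-=y^-$ and $x^+<y^+$; $x\,\mathsf{f}\,y$ iff $x^+=y^+$ and $y^-<x^-$. An instance of $\mathrm{CSP}(\{r_1,r_2\})$ is a set of variables and constraints $x\,r\,y$ with $r\in\{r_1,r_2\}$; it is satisfiable if some assignment of intervals satisfies all constraints. The arc-labelled graph $G_\mathcal{I}$ has the variables as vertices and, for each constraint $u\,r\,v$, an arc $(u,v)$ labelled $r$ (an $r$-arc); parallel arcs and loops are allowed. A cycle is a sequence of distinct vertices $v_1,\dots,v_\ell$ ($\ell\ge1$) together with distinct arcs $a_1,\dots,a_\ell$ where $a_i$ joins $v_i$ and $v_{i+1}$ (indices mod $\ell$), i.e. a cycle of the underlying undirected multigraph (a loop or two parallel/antiparallel arcs form a cycle) with a traversal direction; $a_i$ is forward if it is $(v_i,v_{i+1})$ and reverse otherwise. Arcs "have the same direction" if they are all forward or all reverse; a directed cycle of $r$-arcs is a cycle consisting of $r$-arcs all of the same direction. Two arcs meet head-to-head if they are consecutive on the cycle and their common vertex is the head of both. *)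

theory Defs
  imports Main "HOL.Rat"
begin

datatype allen = Ap | Ao | Ad | As | Af

definition is_interval :: "rat \<times> rat \<Rightarrow> bool" where
  "is_interval x \<longleftrightarrow> fst x < snd x"

definition holds :: "allen \<Rightarrow> rat \<times> rat \<Rightarrow> rat \<times> rat \<Rightarrow> bool" where
  "holds r x y = (case r of
      Ap \<Rightarrow> snd x < fst y
    | Ao \<Rightarrow> fst x < fst y \<and> fst y < snd x \<and> snd x < snd y
    | Ad \<Rightarrow> fst y < fst x \<and> snd x < snd y
    | As \<Rightarrow> fst x = fst y \<and> snd x < snd y
    | Af \<Rightarrow> snd x = snd y \<and> fst y < fst x)"

text \<open>A constraint (u, r, v) means  u r v ; it is also the r-arc (u,v) of the graph.
  An instance is a finite set of constraints.\<close>

type_synonym 'v constr = "'v \<times> allen \<times> 'v"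

definition instance_of :: "allen \<Rightarrow> allen \<Rightarrow> 'v constr set \<Rightarrow> bool" where
  "instance_of r1 r2 C \<longleftrightarrow> finite C \<and> (\<forall>c\<in>C. fst (snd c) \<in> {r1, r2})"

definition satisfiable :: "'v constr set \<Rightarrow> bool" where
  "satisfiable C \<longleftrightarrow> (\<exists>f :: 'v \<Rightarrow> rat \<times> rat.
      (\<forall>v. is_interval (f v)) \<and> (\<forall>(u, r, w) \<in> C. holds r (f u) (f w)))"

definition lbl :: "'v constr \<Rightarrow> allen" where
  "lbl a = fst (snd a)"

definition joins :: "'v constr \<Rightarrow> 'v \<Rightarrow> 'v \<Rightarrow> bool" where
  "joins a x y \<longleftrightarrow> (fst a = x \<and> snd (snd a) = y) \<or> (fst a = y \<and> snd (snd a) = x)"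

definition is_cycle :: "'v constr set \<Rightarrow> 'v list \<Rightarrow> 'v constr list \<Rightarrow> bool" where
  "is_cycle C vs as \<longleftrightarrow> length vs \<ge> 1 \<and> length as = length vs \<and> distinct vs \<and> distinct as
     \<and> set as \<subseteq> C
     \<and> (\<forall>i < length vs. joins (as ! i) (vs ! i) (vs ! ((i + 1) mod length vs)))"

definition fwd :: "'v list \<Rightarrow> 'v constr list \<Rightarrow> nat \<Rightarrow> bool" where
  "fwd vs as i \<longleftrightarrow> fst (as ! i) = vs ! i \<and> snd (snd (as ! i)) = vs ! ((i + 1) mod length vs)"

definition same_dir :: "'v list \<Rightarrow> 'v constr list \<Rightarrow> allen \<Rightarrow> bool" where
  "same_dir vs as r \<longleftrightarrow>
     (\<forall>i < length as. lbl (as ! i) = r \<longrightarrow> fwd vs as i) \<or>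
     (\<forall>i < length as. lbl (as ! i) = r \<longrightarrow> \<not> fwd vs as i)"

definition has_lbl :: "'v constr list \<Rightarrow> allen \<Rightarrow> bool" where
  "has_lbl as r \<longleftrightarrow> (\<exists>i < length as. lbl (as ! i) = r)"

definition directed_cycle_of :: "'v list \<Rightarrow> 'v constr list \<Rightarrow> allen \<Rightarrow> bool" where
  "directed_cycle_of vs as r \<longleftrightarrow> (\<forall>i < length as. lbl (as ! i) = r) \<and> same_dir vs as r"

definition head_to_head :: "'v list \<Rightarrow> 'v constr list \<Rightarrow> allen \<Rightarrow> bool" where
  "head_to_head vs as r \<longleftrightarrow> length as \<ge> 2 \<and>
     (\<exists>i < length as. lbl (as ! i) = r \<and> lbl (as ! ((i + 1) mod length as)) = r
        \<and> fwd vs as i \<and> \<not> fwd vs as ((i + 1) mod length as))"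

text \<open>The gap from a reverse o-arc at position i to the next one at
  position (i+d) mod l has length d, 0 < d <= l (d = l if it is the only one).\<close>

definition p_between_rev_o :: "'v list \<Rightarrow> 'v constr list \<Rightarrow> bool" where
  "p_between_rev_o vs as \<longleftrightarrow>
     (let l = length as; revO = (\<lambda>j. lbl (as ! j) = Ao \<and> \<not> fwd vs as j) in
      \<forall>i < l. \<forall>d. 0 < d \<and> d \<le> l \<and> revO i \<and> revO ((i + d) mod l)
           \<and> (\<forall>k. 0 < k \<and> k < d \<longrightarrow> \<not> revO ((i + k) mod l))
        \<longrightarrow> (\<exists>k. 0 < k \<and> k < d \<and> lbl (as ! ((i + k) mod l)) = Ap))"

definition bad_cycle :: "allen \<Rightarrow> allen \<Rightarrow> 'v list \<Rightarrow> 'v constr list \<Rightarrow> bool" where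
  "bad_cycle r1 r2 vs as \<longleftrightarrow>
     (if r1 = Ad \<and> r2 = Ap then
        same_dir vs as Ap \<and> \<not> head_to_head vs as Ad
      else if r1 = Ad \<and> r2 = Ao then
        same_dir vs as Ad \<and> same_dir vs as Ao
      else if r1 = Ao \<and> r2 = Ap then
        directed_cycle_of vs as Ao \<or>
        (has_lbl as Ap \<and> (\<forall>i < length as. lbl (as ! i) = Ap \<longrightarrow> fwd vs as i)
          \<and> p_between_rev_o vs as)
      else if r1 \<in> {Af, As} \<and> r2 \<in> {Ad, Ao, Ap} then
        directed_cycle_of vs as r1 \<or> (has_lbl as r2 \<and> same_dir vs as r2)
      else False)"

end

theory Submission
  imports Defs
begin
definition T :: "allen \<Rightarrow> bool \<Rightarrow> bool \<Rightarrow> bool \<Rightarrow> bool \<Rightarrow> bool" where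
 "T r f s t st = (case r of
    Ap \<Rightarrow> f \<and> st
  | Ao \<Rightarrow> (if f then (s \<longrightarrow> t) \<and> st else \<not> s \<and> t \<and> st)
  | Ad \<Rightarrow> (if f then t \<and> st else \<not> s \<and> st)
  | As \<Rightarrow> (if f then (\<not> s \<and> st = t) \<or> (t \<and> st) else \<not> s \<and> st = t)
  | Af \<Rightarrow> (if f then t \<and> st = (\<not> s) else (t \<and> st = (\<not> s)) \<or> (\<not> s \<and> st)))"

definition ep :: "rat \<times> rat \<Rightarrow> bool \<Rightarrow> rat" where
 "ep X s = (if s then snd X else fst X)"

lemma T_sem:
  assumes "holds r X Y" "is_interval X" "is_interval Y" "T r f s t st"
  shows "if f then ep X s \<le> ep Y t \<and> (st \<longrightarrow> ep X s < ep Y t)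
         else ep Y s \<le> ep X t \<and> (st \<longrightarrow> ep Y s < ep X t)"
  using assms by (cases r; cases f; cases s; cases t; cases st)
    (auto simp: T_def holds_def ep_def is_interval_def)

lemma T_complete:
  assumes "is_interval X" "is_interval Y"
   and "\<And>s t st. T r True s t st \<Longrightarrow> ep X s \<le> ep Y t \<and> (st \<longrightarrow> ep X s < ep Y t)"
   and "\<And>s t st. T r False s t st \<Longrightarrow> ep Y s \<le> ep X t \<and> (st \<longrightarrow> ep Y s < ep X t)"
  shows "holds r X Y"
proof (cases r)
  case Ap
  then show ?thesis using assms(3)[of True False True] by (auto simp: T_def holds_def ep_def)
next
  case Ao
  then show ?thesis using assms(3)[of False False True] assms(3)[of True True True]
     assms(4)[of False True True] by (auto simp: T_def holds_def ep_def)
next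
  case Ad
  then show ?thesis using assms(3)[of True True True] 
     assms(4)[of False False True] by (auto simp: T_def holds_def ep_def)
next
  case As
  then show ?thesis using assms(3)[of False False False] assms(3)[of True True True]
     assms(4)[of False False False] by (force simp: T_def holds_def ep_def)
next
  case Af
  then show ?thesis using assms(3)[of True True False] assms(4)[of True True False]
     assms(4)[of False False True] by (force simp: T_def holds_def ep_def)
qed

lemma T_raise: "T r f True t st \<Longrightarrow> T r f False t True"
  by (cases r; cases f; cases t) (auto simp: T_def)
lemma T_traise: "T r f s False st \<Longrightarrow> T r f s True True"
  by (cases r; cases f; cases s) (auto simp: T_def)
lemma T_down: "T r f True False st \<Longrightarrow> st"
  by (cases r; cases f) (auto simp: T_def)
lemma T_back: "T r True s t st1 \<Longrightarrow> T r False t s st2 \<Longrightarrow> \<not> st1 \<and> \<not> st2"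
  by (cases r; cases s; cases t) (auto simp: T_def)

definition cstep :: "'v constr \<Rightarrow> 'v \<times> bool \<Rightarrow> 'v \<times> bool \<Rightarrow> bool \<Rightarrow> bool" where
 "cstep a x y st \<longleftrightarrow>
    (fst x = fst a \<and> fst y = snd (snd a) \<and> T (lbl a) True (snd x) (snd y) st) \<or>
    (fst x = snd (snd a) \<and> fst y = fst a \<and> T (lbl a) False (snd x) (snd y) st)"

definition walk :: "'v constr set \<Rightarrow> nat \<Rightarrow> (nat \<Rightarrow> 'v \<times> bool) \<Rightarrow> (nat \<Rightarrow> 'v constr) \<Rightarrow> bool" where
 "walk C l n a \<longleftrightarrow> 0 < l \<and> n l = n 0 \<and>
    (\<forall>i<l. a i \<in> C \<and> (\<exists>st. cstep (a i) (n i) (n (Suc i)) st)) \<and>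
    (\<exists>i<l. cstep (a i) (n i) (n (Suc i)) True)"

lemma cstep_raise: "cstep a (v, True) m st \<Longrightarrow> cstep a (v, False) m True"
  unfolding cstep_def using T_raise by fastforce
lemma cstep_traise: "cstep a m (v, False) st \<Longrightarrow> cstep a m (v, True) True"
  unfolding cstep_def using T_traise by fastforce
lemma cstep_down: "cstep a x y st \<Longrightarrow> snd x \<Longrightarrow> \<not> snd y \<Longrightarrow> st"
  unfolding cstep_def using T_down by (metis (full_types))

lemma cstep_V: "cstep a x y st \<Longrightarrow> fst x \<in> {fst a, snd (snd a)} \<and> fst y \<in> {fst a, snd (snd a)}"
  unfolding cstep_def by auto

lemma rel_to_walk:
  assumes "(z, y) \<in> Rc\<^sup>*" and "Rc = {(x,y). \<exists>a\<in>C. \<exists>st. cstep a x y st}"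
    and "a0 \<in> C" "cstep a0 y z True"
  shows "\<exists>l n a. walk C l n a"
proof -
  obtain k where "(z, y) \<in> Rc ^^ k" using assms(1) rtrancl_power by blast
  then obtain p where p: "p 0 = z" "p k = y" "\<forall>i<k. (p i, p (Suc i)) \<in> Rc"
    using relpow_fun_conv by metis
  have "\<forall>i. \<exists>b. i < k \<longrightarrow> b \<in> C \<and> (\<exists>st. cstep b (p i) (p (Suc i)) st)"
    using p(3) assms(2) by blast
  then obtain A where A: "\<forall>i<k. A i \<in> C \<and> (\<exists>st. cstep (A i) (p i) (p (Suc i)) st)"
    by metis
  define n where "n i = (if i \<le> k then p i else z)" for i
  define b where "b i = (if i < k then A i else a0)" for i
  have "walk C (Suc k) n b"
    unfolding walk_def
  proof (intro conjI)
    show "n (Suc k) = n 0" using p by (simp add: n_def)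
    show "\<forall>i<Suc k. b i \<in> C \<and> (\<exists>st. cstep (b i) (n i) (n (Suc i)) st)"
    proof (intro allI impI)
      fix i assume "i < Suc k"
      then show "b i \<in> C \<and> (\<exists>st. cstep (b i) (n i) (n (Suc i)) st)"
        using A assms(3,4) p by (cases "i < k") (auto simp: n_def b_def less_Suc_eq)
    qed
    show "\<exists>i<Suc k. cstep (b i) (n i) (n (Suc i)) True"
      using assms(4) p by (intro exI[of _ k]) (auto simp: n_def b_def)
  qed simp
  then show ?thesis by blast
qed

lemma no_walk_sat:
  assumes fin: "finite C" and nw: "\<not> (\<exists>l n a. walk C l n a)"
  shows "satisfiable C"
proof -
  define Rc where "Rc = {(x,y). \<exists>a\<in>C. \<exists>st. cstep a x y st}"
  define Sc where "Sc = {(x,y). \<exists>a\<in>C. cstep a x y True}"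
  define Q where "Q = Rc\<^sup>* O Sc O Rc\<^sup>*"
  define Vs where "Vs = fst ` C \<union> (\<lambda>a. snd (snd a)) ` C"
  define N where "N = Vs \<times> (UNIV :: bool set)"
  have finN: "finite N" unfolding N_def Vs_def using fin by auto
  have RcN: "Rc \<subseteq> N \<times> N" proof
    fix e assume "e \<in> Rc"
    then obtain x y a st where e: "e = (x, y)" "a \<in> C" "cstep a x y st" unfolding Rc_def by blast
    then have "fst x \<in> Vs" "fst y \<in> Vs" using cstep_V[OF e(3)] unfolding Vs_def by auto
    then show "e \<in> N \<times> N" using e(1) unfolding N_def by (auto simp: mem_Times_iff)
  qed
  have ScRc: "Sc \<subseteq> Rc" unfolding Sc_def Rc_def by auto
  have irr: "(x, x) \<notin> Q" for x
  proof
    assume "(x, x) \<in> Q"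
    then obtain y z where "(x, y) \<in> Rc\<^sup>*" "(y, z) \<in> Sc" "(z, x) \<in> Rc\<^sup>*"
      unfolding Q_def by blast
    then have "(z, y) \<in> Rc\<^sup>*" by simp
    moreover obtain a0 where "a0 \<in> C" "cstep a0 y z True" using \<open>(y,z) \<in> Sc\<close> Sc_def by blast
    ultimately show False using rel_to_walk[OF _ Rc_def] nw by blast
  qed
  have QN: "{y. (y, x) \<in> Q} \<subseteq> N" for x
  proof
    fix y assume "y \<in> {y. (y, x) \<in> Q}"
    then obtain y1 z1 where h: "(y, y1) \<in> Rc\<^sup>*" "(y1, z1) \<in> Sc" unfolding Q_def by blast
    then have "y1 \<in> N" using ScRc RcN by blast
    from h(1) show "y \<in> N"
    proof (cases rule: converse_rtranclE)
      case base then show ?thesis using \<open>y1 \<in> N\<close> by simp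
    next
      case (step c) then show ?thesis using RcN by blast
    qed
  qed
  have finQ: "finite {y. (y, x) \<in> Q}" for x using QN finN finite_subset by blast
  define g where "g x = card {y. (y, x) \<in> Q}" for x
  have g1: "g x \<le> g z" if "(x, z) \<in> Rc" for x z
  proof -
    have "{y. (y, x) \<in> Q} \<subseteq> {y. (y, z) \<in> Q}"
      using that unfolding Q_def by (auto intro: rtrancl_into_rtrancl)
    then show ?thesis unfolding g_def using finQ card_mono by blast
  qed
  have g2: "g x < g z" if "(x, z) \<in> Sc" for x z
  proof -
    have "{y. (y, x) \<in> Q} \<subseteq> {y. (y, z) \<in> Q}"
      using that ScRc unfolding Q_def by (auto intro: rtrancl_into_rtrancl)
    moreover have "x \<in> {y. (y, z) \<in> Q}" using that unfolding Q_def by blast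
    moreover have "x \<notin> {y. (y, x) \<in> Q}" using irr by blast
    ultimately have "{y. (y, x) \<in> Q} \<subset> {y. (y, z) \<in> Q}" by blast
    then show ?thesis unfolding g_def using finQ psubset_card_mono by blast
  qed
  have g3: "g (v, False) \<le> g (v, True)" for v
  proof -
    have "{y. (y, (v, False)) \<in> Q} \<subseteq> {y. (y, (v, True)) \<in> Q}"
    proof
      fix y assume "y \<in> {y. (y, (v, False)) \<in> Q}"
      then obtain y1 z1 where h: "(y, y1) \<in> Rc\<^sup>*" "(y1, z1) \<in> Sc" "(z1, (v, False)) \<in> Rc\<^sup>*"
        unfolding Q_def by blast
      from h(3) show "y \<in> {y. (y, (v, True)) \<in> Q}"
      proof (cases rule: rtranclE)
        case base
        then have "(y1, (v, True)) \<in> Sc" using h(2) cstep_traise unfolding Sc_def by fastforce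
        then show ?thesis using h(1) unfolding Q_def by blast
      next
        case (step m)
        then have "(m, (v, True)) \<in> Rc" using cstep_traise unfolding Rc_def by fastforce
        then have "(z1, (v, True)) \<in> Rc\<^sup>*" using step by auto
        then show ?thesis using h(1,2) unfolding Q_def by blast
      qed
    qed
    then show ?thesis unfolding g_def using finQ card_mono by blast
  qed
  have g4: "(x, z) \<in> Sc" if hh: "(x, z) \<in> Rc" "snd x" "\<not> snd z" for x z
  proof -
    obtain a st where a: "a \<in> C" "cstep a x z st" using hh(1) unfolding Rc_def by blast
    then have "st" using cstep_down hh(2,3) by blast
    then show ?thesis using a unfolding Sc_def by auto
  qed
  define val where "val x = 2 * of_nat (g x) + (if snd x then 1 else (0::rat))" for x
  have v1: "val x \<le> val z" if "(x, z) \<in> Rc" for x z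
  proof (cases "g x < g z")
    case True
    then have "of_nat (g x) + 1 \<le> (of_nat (g z) :: rat)" by (metis Suc_leI of_nat_Suc of_nat_le_iff add.commute)
    then show ?thesis unfolding val_def by auto
  next
    case False
    then have "g x = g z" using g1[OF that] by simp
    moreover have "\<not> (snd x \<and> \<not> snd z)" using g4[OF that] g2 False by blast
    ultimately show ?thesis unfolding val_def by auto
  qed
  have v2: "val x < val z" if "(x, z) \<in> Sc" for x z
  proof -
    have "g x < g z" using g2[OF that] .
    then have "of_nat (g x) + 1 \<le> (of_nat (g z) :: rat)" by (metis Suc_leI of_nat_Suc of_nat_le_iff add.commute)
    then show ?thesis unfolding val_def by auto
  qed
  define f where "f v = (val (v, False), val (v, True))" for v
  have epf: "ep (f v) s = val (v, s)" for v s unfolding f_def ep_def by auto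
  have intv: "is_interval (f v)" for v
  proof -
    have "of_nat (g (v, False)) \<le> (of_nat (g (v, True)) :: rat)" using g3 by simp
    then show ?thesis unfolding is_interval_def f_def val_def by auto
  qed
  have "holds r (f u) (f w)" if "(u, r, w) \<in> C" for u r w
  proof (rule T_complete[OF intv intv])
    fix s t st assume "T r True s t st"
    then have "cstep (u, r, w) (u, s) (w, t) st" unfolding cstep_def lbl_def by simp
    then have 1: "((u, s), (w, t)) \<in> Rc" and 2: "st \<Longrightarrow> ((u, s), (w, t)) \<in> Sc"
      using that unfolding Rc_def Sc_def by auto
    then show "ep (f u) s \<le> ep (f w) t \<and> (st \<longrightarrow> ep (f u) s < ep (f w) t)"
      using v1[OF 1] v2 unfolding epf by blast
  next
    fix s t st assume "T r False s t st"
    then have "cstep (u, r, w) (w, s) (u, t) st" unfolding cstep_def lbl_def by simp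
    then have 1: "((w, s), (u, t)) \<in> Rc" and 2: "st \<Longrightarrow> ((w, s), (u, t)) \<in> Sc"
      using that unfolding Rc_def Sc_def by auto
    then show "ep (f w) s \<le> ep (f u) t \<and> (st \<longrightarrow> ep (f w) s < ep (f u) t)"
      using v1[OF 1] v2 unfolding epf by blast
  qed
  then show ?thesis unfolding satisfiable_def using intv by blast
qed

lemma mod_Suc_n: "0 < l \<Longrightarrow> n l = n 0 \<Longrightarrow> n (Suc x mod l) = n (Suc (x mod l))"
  by (simp add: mod_Suc)

lemma walk_rot:
  assumes w: "walk C l n a" and p: "p < l"
  shows "walk C l (\<lambda>k. n ((k + p) mod l)) (\<lambda>k. a ((k + p) mod l))"
proof -
  have l0: "0 < l" and nl: "n l = n 0" using w unfolding walk_def by auto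
  have sh: "n ((Suc k + p) mod l) = n (Suc ((k + p) mod l))" for k
    using mod_Suc_n[OF l0 nl, of "k + p"] by simp
  have st: "\<forall>i<l. a i \<in> C \<and> (\<exists>st. cstep (a i) (n i) (n (Suc i)) st)" using w unfolding walk_def by auto
  obtain i where i: "i < l" "cstep (a i) (n i) (n (Suc i)) True" using w unfolding walk_def by auto
  define k where "k = (i + (l - p)) mod l"
  have k: "k < l" "(k + p) mod l = i" using l0 p i(1) unfolding k_def
    by (auto simp: mod_add_left_eq)
  show ?thesis unfolding walk_def
  proof (intro conjI)
    show "n ((l + p) mod l) = n ((0 + p) mod l)" by simp
    show "\<forall>j<l. a ((j + p) mod l) \<in> C \<and> (\<exists>st. cstep (a ((j + p) mod l)) (n ((j + p) mod l)) (n ((Suc j + p) mod l)) st)"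
      using st l0 unfolding sh by auto
    show "\<exists>j<l. cstep (a ((j + p) mod l)) (n ((j + p) mod l)) (n ((Suc j + p) mod l)) True"
      using k i unfolding sh by metis
  qed (use l0 in auto)
qed

lemma walk_cut_same:
  assumes w: "walk C l n a" and q: "0 < q" "q < l" "n q = n 0"
  shows "walk C q n a \<or> walk C (l - q) (\<lambda>k. n (k + q)) (\<lambda>k. a (k + q))"
proof -
  have nl: "n l = n 0" using w unfolding walk_def by auto
  have st: "\<forall>i<l. a i \<in> C \<and> (\<exists>st. cstep (a i) (n i) (n (Suc i)) st)" using w unfolding walk_def by auto
  obtain i where i: "i < l" "cstep (a i) (n i) (n (Suc i)) True" using w unfolding walk_def by auto
  show ?thesis
  proof (cases "i < q")
    case True
    then show ?thesis using q st i unfolding walk_def by auto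
  next
    case False
    have "walk C (l - q) (\<lambda>k. n (k + q)) (\<lambda>k. a (k + q))" unfolding walk_def
    proof (intro conjI)
      show "n (l - q + q) = n (0 + q)" using q nl by simp
      show "\<forall>j<l - q. a (j + q) \<in> C \<and> (\<exists>st. cstep (a (j + q)) (n (j + q)) (n (Suc j + q)) st)"
        using st by auto
      show "\<exists>j<l - q. cstep (a (j + q)) (n (j + q)) (n (Suc j + q)) True"
        using i False by (intro exI[of _ "i - q"]) auto
    qed (use q in auto)
    then show ?thesis by blast
  qed
qed

lemma walk_cut_state:
  assumes w: "walk C l n a" and q: "0 < q" "q < l" "n 0 = (v, True)" "n q = (v, False)"
  shows "walk C q (n(0 := (v, False))) a"
proof -
  have st: "\<forall>i<l. a i \<in> C \<and> (\<exists>st. cstep (a i) (n i) (n (Suc i)) st)" using w unfolding walk_def by auto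
  then obtain st0 where "cstep (a 0) (v, True) (n (Suc 0)) st0" using q by (metis gr_zeroI less_trans)
  then have c0: "cstep (a 0) (v, False) (n (Suc 0)) True" by (rule cstep_raise)
  show ?thesis unfolding walk_def
  proof (intro conjI)
    show "\<forall>i<q. a i \<in> C \<and> (\<exists>st. cstep (a i) ((n(0 := (v, False))) i) ((n(0 := (v, False))) (Suc i)) st)"
      using st q c0 by (auto simp: nth_Cons')
    show "\<exists>i<q. cstep (a i) ((n(0 := (v, False))) i) ((n(0 := (v, False))) (Suc i)) True"
      using q c0 by (intro exI[of _ 0]) auto
  qed (use q in auto)
qed

lemma min_walk_inj:
  assumes w: "walk C l n a" and m: "\<forall>l' n' a'. walk C l' n' a' \<longrightarrow> l \<le> l'"
    and ij: "i < j" "j < l"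
  shows "fst (n i) \<noteq> fst (n j)"
proof
  assume eq: "fst (n i) = fst (n j)"
  define n1 where "n1 = (\<lambda>k. n ((k + i) mod l))"
  define a1 where "a1 = (\<lambda>k. a ((k + i) mod l))"
  have w1: "walk C l n1 a1" unfolding n1_def a1_def using walk_rot[OF w] ij by simp
  define q where "q = j - i"
  have q: "0 < q" "q < l" using ij unfolding q_def by auto
  have n10: "n1 0 = n i" using ij unfolding n1_def by simp
  have n1q: "n1 q = n j" using ij unfolding n1_def q_def by simp
  obtain v s t where vs: "n i = (v, s)" "n j = (v, t)" using eq by (metis prod.collapse)
  show False
  proof (cases "s = t")
    case True
    then have "n1 q = n1 0" using n10 n1q vs by simp
    then show False using walk_cut_same[OF w1 q] m q by force
  next
    case False
    show False
    proof (cases s)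
      case True
      then have "n1 0 = (v, True)" "n1 q = (v, False)" using n10 n1q vs \<open>s \<noteq> t\<close> by auto
      then show False using walk_cut_state[OF w1 q] m q by force
    next
      case fs: False
      define n2 where "n2 = (\<lambda>k. n1 ((k + q) mod l))"
      define a2 where "a2 = (\<lambda>k. a1 ((k + q) mod l))"
      have w2: "walk C l n2 a2" unfolding n2_def a2_def using walk_rot[OF w1] q by simp
      have "n2 0 = (v, True)" "n2 (l - q) = (v, False)"
        using n10 n1q vs \<open>s \<noteq> t\<close> fs q unfolding n2_def by auto
      then show False using walk_cut_state[OF w2, of "l - q"] m q by force
    qed
  qed
qed

lemma min_walk_exists:
  assumes "walk C l n a"
  shows "\<exists>l n a. walk C l n a \<and> (\<forall>l' n' a'. walk C l' n' a' \<longrightarrow> l \<le> l')"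
proof -
  define P where "P l \<longleftrightarrow> (\<exists>n a. walk C l n a)" for l
  have "P l" using assms P_def by blast
  then have "P (LEAST l. P l)" by (rule LeastI)
  moreover have "\<forall>l'. P l' \<longrightarrow> (LEAST l. P l) \<le> l'" by (auto intro: Least_le)
  ultimately show ?thesis unfolding P_def by blast
qed

lemma cstep_back: "cstep a x y st1 \<Longrightarrow> cstep a y x st2 \<Longrightarrow> fst x \<noteq> fst y \<Longrightarrow> \<not> st1"
  unfolding cstep_def using T_back by metis

lemma cstep_joins: "cstep a x y st \<Longrightarrow> joins a (fst x) (fst y)"
  unfolding cstep_def joins_def by auto

lemma min_walk_cycle:
  assumes w: "walk C l n a" and m: "\<forall>l' n' a'. walk C l' n' a' \<longrightarrow> l \<le> l'"
  defines "vs \<equiv> map (\<lambda>i. fst (n i)) [0..<l]" and "as \<equiv> map a [0..<l]"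
  shows "is_cycle C vs as \<and> (2 \<le> l \<longrightarrow>
     (\<forall>i<l. \<exists>st. T (lbl (as ! i)) (fwd vs as i) (snd (n i)) (snd (n (Suc i))) st) \<and>
     (\<exists>i<l. T (lbl (as ! i)) (fwd vs as i) (snd (n i)) (snd (n (Suc i))) True))"
proof -
  define V where "V k = fst (n k)" for k
  have l0: "0 < l" and nl: "n l = n 0" using w unfolding walk_def by auto
  have st: "\<forall>i<l. a i \<in> C \<and> (\<exists>st. cstep (a i) (n i) (n (Suc i)) st)" using w unfolding walk_def by auto
  obtain i0 where i0: "i0 < l" "cstep (a i0) (n i0) (n (Suc i0)) True" using w unfolding walk_def by auto
  have inj: "V i \<noteq> V j" if "i < j" "j < l" for i j using min_walk_inj[OF w m that] V_def by simp
  have Vl: "V l = V 0" using nl V_def by simp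
  have vsi: "vs ! i = V i" if "i < l" for i using that unfolding vs_def V_def by simp
  have vsS: "vs ! ((i + 1) mod l) = V (Suc i)" if "i < l" for i
  proof (cases "Suc i < l")
    case True then show ?thesis unfolding vs_def V_def by simp
  next
    case False then have "Suc i = l" using that by simp
    then show ?thesis using Vl l0 unfolding vs_def V_def by simp
  qed
  have asi: "as ! i = a i" if "i < l" for i using that unfolding as_def by simp
  have len: "length vs = l" "length as = l" unfolding vs_def as_def by auto
  have jn: "joins (a i) (V i) (V (Suc i))" if "i < l" for i
    unfolding V_def using st that cstep_joins by blast
  have distV: "distinct vs" unfolding vs_def distinct_conv_nth
    by (auto simp: V_def[symmetric]) (metis inj nat_neq_iff)
  have Vne: "V (Suc i) \<noteq> V i" if "i < l" "2 \<le> l" for i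
  proof (cases "Suc i < l")
    case True then show ?thesis using inj[of i "Suc i"] by auto
  next
    case False then have "Suc i = l" using that by simp
    then show ?thesis using Vl inj[of 0 i] that by auto
  qed
  have inja: "a i \<noteq> a j" if ij: "i < j" "j < l" for i j
  proof
    assume eq: "a i = a j"
    have ji: "{V i, V (Suc i)} = {V j, V (Suc j)}"
      using jn[of i] jn[of j] ij eq unfolding joins_def by auto
    have "V i \<noteq> V j" using inj ij by simp
    then have A: "V i = V (Suc j)" and B: "V (Suc i) = V j" using ji by (auto simp: doubleton_eq_iff)
    have "j = Suc i" using B inj[of "Suc i" j] ij by (cases "Suc i < j") auto
    show False
    proof (cases "Suc j < l")
      case True then show ?thesis using A inj[of i "Suc j"] ij by auto
    next
      case False
      then have "Suc j = l" using ij by simp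
      then have "V i = V 0" using A Vl by simp
      then have "i = 0" using inj[of 0 i] ij by (cases "i = 0") auto
      then have l2: "l = 2" "j = 1" using \<open>Suc j = l\<close> \<open>j = Suc i\<close> by auto
      obtain s0 where s0: "cstep (a 0) (n 0) (n 1) s0" using st l2 by fastforce
      obtain s1 where s1: "cstep (a 0) (n 1) (n 0) s1" using st l2 nl eq \<open>i = 0\<close>
        by (metis One_nat_def lessI numeral_2_eq_2)
      have d: "fst (n 0) \<noteq> fst (n 1)" using inj[of 0 1] l2 V_def by simp
      have "\<not> s0" using cstep_back[OF s0 s1 d] .
      moreover have "\<not> s1" using cstep_back[OF s1 s0] d by simp
      ultimately show False using i0 l2 s0 s1 nl eq \<open>i = 0\<close> 
        by (metis One_nat_def cstep_back d less_2_cases numeral_2_eq_2)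
    qed
  qed
  have dista: "distinct as" unfolding as_def distinct_conv_nth
    by auto (metis inja nat_neq_iff)
  have cyc: "is_cycle C vs as" unfolding is_cycle_def
    using len distV dista st l0 jn vsi vsS unfolding as_def by (auto simp: len)
  have fw: "T (lbl (as ! i)) (fwd vs as i) (snd (n i)) (snd (n (Suc i))) s"
    if "i < l" "2 \<le> l" "cstep (a i) (n i) (n (Suc i)) s" for i s
  proof -
    have ne: "V (Suc i) \<noteq> V i" using Vne that by simp
    have fe: "fwd vs as i \<longleftrightarrow> fst (a i) = V i \<and> snd (snd (a i)) = V (Suc i)"
      unfolding fwd_def using vsi[OF that(1)] vsS[OF that(1)] asi[OF that(1)] len by simp
    from that(3) show ?thesis
      unfolding cstep_def fe using asi[OF that(1)] ne unfolding V_def by auto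
  qed
  show ?thesis using cyc fw st i0 by blast
qed

definition chainF :: "'v list \<Rightarrow> 'v constr list \<Rightarrow> (nat \<Rightarrow> bool) \<Rightarrow> bool" where
 "chainF vs as \<sigma> \<longleftrightarrow> \<sigma> (length as) = \<sigma> 0 \<and>
   (\<forall>i<length as. \<exists>st. T (lbl (as ! i)) (fwd vs as i) (\<sigma> i) (\<sigma> (Suc i)) st) \<and>
   (\<exists>i<length as. T (lbl (as ! i)) (fwd vs as i) (\<sigma> i) (\<sigma> (Suc i)) True)"

definition chainB :: "'v list \<Rightarrow> 'v constr list \<Rightarrow> (nat \<Rightarrow> bool) \<Rightarrow> bool" where
 "chainB vs as \<sigma> \<longleftrightarrow> \<sigma> (length as) = \<sigma> 0 \<and>
   (\<forall>i<length as. \<exists>st. T (lbl (as ! i)) (\<not> fwd vs as i) (\<sigma> (Suc i)) (\<sigma> i) st) \<and>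
   (\<exists>i<length as. T (lbl (as ! i)) (\<not> fwd vs as i) (\<sigma> (Suc i)) (\<sigma> i) True)"

lemma mono_chain:
  fixes g :: "nat \<Rightarrow> rat"
  assumes "\<forall>i<l. g i \<le> g (Suc i)" "i \<le> j" "j \<le> l"
  shows "g i \<le> g j"
  using assms(2,3)
proof (induction j)
  case 0 then show ?case by simp
next
  case (Suc j)
  then show ?case using assms(1) by (cases "i = Suc j") (auto intro: order_trans)
qed

lemma cyc_contra:
  fixes g :: "nat \<Rightarrow> rat"
  assumes "\<forall>i<l. g i \<le> g (Suc i)" "i0 < l" "g i0 < g (Suc i0)" "g l = g 0"
  shows False
proof -
  have "g 0 \<le> g i0" using mono_chain[OF assms(1)] assms(2) by simp
  moreover have "g (Suc i0) \<le> g l" using mono_chain[OF assms(1)] assms(2) by simp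
  ultimately show False using assms(3,4) by simp
qed

lemma step_potF:
  assumes "holds (lbl a) (f (fst a)) (f (snd (snd a)))" "\<forall>v. is_interval (f v)"
    "joins a x y" "T (lbl a) (fst a = x \<and> snd (snd a) = y) s t st"
  shows "ep (f x) s \<le> ep (f y) t \<and> (st \<longrightarrow> ep (f x) s < ep (f y) t)"
proof (cases "fst a = x \<and> snd (snd a) = y")
  case True
  then show ?thesis using T_sem[OF assms(1) _ _ ] assms(2,4) by fastforce
next
  case False
  then have "fst a = y" "snd (snd a) = x" using assms(3) unfolding joins_def by auto
  then show ?thesis using T_sem[OF assms(1) _ _ ] assms(2,4) False by fastforce
qed

lemma step_potB:
  assumes "holds (lbl a) (f (fst a)) (f (snd (snd a)))" "\<forall>v. is_interval (f v)"
    "joins a x y" "T (lbl a) (\<not> (fst a = x \<and> snd (snd a) = y)) t s st"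
  shows "ep (f y) t \<le> ep (f x) s \<and> (st \<longrightarrow> ep (f y) t < ep (f x) s)"
proof (cases "fst a = x \<and> snd (snd a) = y")
  case True
  then show ?thesis using T_sem[OF assms(1) _ _ ] assms(2,4) by fastforce
next
  case False
  then have "fst a = y" "snd (snd a) = x" using assms(3) unfolding joins_def by auto
  then show ?thesis using T_sem[OF assms(1) _ _ ] assms(2,4) False by fastforce
qed

lemma potential:
  assumes sat: "satisfiable C" and cyc: "is_cycle C vs as"
    and ch: "chainF vs as \<sigma> \<or> chainB vs as \<sigma>"
  shows False
proof -
  obtain f where f: "\<forall>v. is_interval (f v)" "\<forall>(u, r, w) \<in> C. holds r (f u) (f w)"
    using sat unfolding satisfiable_def by blast
  define l where "l = length as"
  have lv: "length vs = l" and l0: "0 < l" using cyc unfolding is_cycle_def l_def by auto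
  have hol: "holds (lbl (as ! i)) (f (fst (as ! i))) (f (snd (snd (as ! i))))" if "i < l" for i
  proof -
    have "as ! i \<in> C" using cyc that unfolding is_cycle_def l_def by auto
    then show ?thesis using f(2) unfolding lbl_def by (cases "as ! i") auto
  qed
  have jn: "joins (as ! i) (vs ! i) (vs ! ((i + 1) mod l))" if "i < l" for i
    using cyc that unfolding is_cycle_def lv by simp
  have fe: "fwd vs as i \<longleftrightarrow> fst (as ! i) = vs ! i \<and> snd (snd (as ! i)) = vs ! ((i + 1) mod l)" for i
    unfolding fwd_def lv by simp
  define G where "G i = ep (f (vs ! (i mod l))) (\<sigma> i)" for i
  have Gi: "G i = ep (f (vs ! i)) (\<sigma> i)" if "i < l" for i using that G_def by simp
  have GS: "G (Suc i) = ep (f (vs ! ((i + 1) mod l))) (\<sigma> (Suc i))" for i using G_def by simp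
  show False using ch
  proof
    assume c: "chainF vs as \<sigma>"
    have "\<forall>i<l. G i \<le> G (Suc i)"
    proof (intro allI impI)
      fix i assume i: "i < l"
      obtain st where "T (lbl (as ! i)) (fwd vs as i) (\<sigma> i) (\<sigma> (Suc i)) st" using c i unfolding chainF_def l_def by blast
      then show "G i \<le> G (Suc i)" using step_potF[OF hol[OF i] f(1) jn[OF i]] i unfolding Gi[OF i] GS fe by blast
    qed
    moreover obtain i0 where i0: "i0 < l" "T (lbl (as ! i0)) (fwd vs as i0) (\<sigma> i0) (\<sigma> (Suc i0)) True"
      using c unfolding chainF_def l_def by blast
    moreover have "G i0 < G (Suc i0)" using step_potF[OF hol[OF i0(1)] f(1) jn[OF i0(1)]] i0 unfolding Gi[OF i0(1)] GS fe by blast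
    moreover have "G l = G 0" using c l0 unfolding G_def chainF_def l_def by simp
    ultimately show False using cyc_contra by blast
  next
    assume c: "chainB vs as \<sigma>"
    have "\<forall>i<l. (- G) i \<le> (- G) (Suc i)"
    proof (intro allI impI)
      fix i assume i: "i < l"
      obtain st where "T (lbl (as ! i)) (\<not> fwd vs as i) (\<sigma> (Suc i)) (\<sigma> i) st" using c i unfolding chainB_def l_def by blast
      then have "ep (f (vs ! ((i + 1) mod l))) (\<sigma> (Suc i)) \<le> ep (f (vs ! i)) (\<sigma> i)"
        using step_potB[OF hol[OF i] f(1) jn[OF i]] unfolding fe by blast
      then show "(- G) i \<le> (- G) (Suc i)" using Gi[OF i] GS[of i] by simp
    qed
    moreover obtain i0 where i0: "i0 < l" "T (lbl (as ! i0)) (\<not> fwd vs as i0) (\<sigma> (Suc i0)) (\<sigma> i0) True"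
      using c unfolding chainB_def l_def by blast
    moreover have "ep (f (vs ! ((i0 + 1) mod l))) (\<sigma> (Suc i0)) < ep (f (vs ! i0)) (\<sigma> i0)"
        using step_potB[OF hol[OF i0(1)] f(1) jn[OF i0(1)]] i0(2) unfolding fe by blast
    then have "(- G) i0 < (- G) (Suc i0)" using Gi[OF i0(1)] GS[of i0] by simp
    moreover have "(- G) l = (- G) 0" using c l0 unfolding G_def chainB_def l_def by simp
    ultimately show False using cyc_contra by blast
  qed
qed

lemma cyc_len: "is_cycle C vs as \<Longrightarrow> length vs = length as \<and> 0 < length as"
  unfolding is_cycle_def by auto

lemma chainF_I:
  assumes "\<sigma> (length as) = \<sigma> 0" "\<And>i. i < length as \<Longrightarrow> T (lbl (as ! i)) (fwd vs as i) (\<sigma> i) (\<sigma> (Suc i)) (P i)"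
    "i0 < length as" "P i0"
  shows "chainF vs as \<sigma>"
proof -
  have "T (lbl (as ! i0)) (fwd vs as i0) (\<sigma> i0) (\<sigma> (Suc i0)) True" using assms(2)[OF assms(3)] assms(4) by simp
  then show ?thesis unfolding chainF_def using assms(1,2,3) by blast
qed

lemma chainB_I:
  assumes "\<sigma> (length as) = \<sigma> 0" "\<And>i. i < length as \<Longrightarrow> T (lbl (as ! i)) (\<not> fwd vs as i) (\<sigma> (Suc i)) (\<sigma> i) (P i)"
    "i0 < length as" "P i0"
  shows "chainB vs as \<sigma>"
proof -
  have "T (lbl (as ! i0)) (\<not> fwd vs as i0) (\<sigma> (Suc i0)) (\<sigma> i0) True" using assms(2)[OF assms(3)] assms(4) by simp
  then show ?thesis unfolding chainB_def using assms(1,2,3) by blast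
qed

lemma nec_dp:
  assumes cyc: "is_cycle C vs as" and lab: "\<forall>i<length as. lbl (as ! i) \<in> {Ad, Ap}"
    and sd: "same_dir vs as Ap" and nh: "\<not> head_to_head vs as Ad"
  shows "\<exists>\<sigma>. chainF vs as \<sigma> \<or> chainB vs as \<sigma>"
proof -
  define l where "l = length as"
  have lv: "length vs = l" and l0: "0 < l" using cyc_len[OF cyc] l_def by auto
  note h2h = nh[unfolded head_to_head_def, folded l_def]
  show ?thesis using sd unfolding same_dir_def
  proof
    assume pf: "\<forall>i<length as. lbl (as ! i) = Ap \<longrightarrow> fwd vs as i"
    define \<sigma> where "\<sigma> i = (lbl (as ! ((i + l - 1) mod l)) = Ad \<and> fwd vs as ((i + l - 1) mod l))" for i
    have "chainF vs as \<sigma>"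
    proof (rule chainF_I[where P = "\<lambda>_. True"])
      have "l + l - 1 = (l - 1) + l" using l0 by simp
      then have "(l + l - 1) mod l = (0 + l - 1) mod l" by simp
      then show "\<sigma> (length as) = \<sigma> 0" unfolding \<sigma>_def l_def by simp
      show "0 < length as" using l0 l_def by simp
    next
      fix i assume i: "i < length as"
      have si: "(Suc i + l - 1) mod l = i" using i l_def by simp
      show "T (lbl (as ! i)) (fwd vs as i) (\<sigma> i) (\<sigma> (Suc i)) True"
      proof (cases "lbl (as ! i) = Ap")
        case True then show ?thesis using pf i by (simp add: T_def)
      next
        case False
        then have d: "lbl (as ! i) = Ad" using lab i by auto
        show ?thesis
        proof (cases "fwd vs as i")
          case True then show ?thesis using d si unfolding \<sigma>_def by (simp add: T_def)
        next
          case nf: False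
          define j where "j = (i + l - 1) mod l"
          have "Suc (i + l - 1) = i + l" using l0 by simp
          then have "(j + 1) mod l = i" unfolding j_def using i l_def by (metis Suc_eq_plus1 mod_Suc_eq mod_add_self2 mod_less)
          then have j: "j < l" "(j + 1) mod l = i" unfolding j_def using l0 by auto
          have "\<not> \<sigma> i"
          proof
            assume "\<sigma> i"
            then have "lbl (as ! j) = Ad" "fwd vs as j" unfolding \<sigma>_def j_def by auto
            moreover have "j \<noteq> i" using \<open>fwd vs as j\<close> nf by auto
            then have "2 \<le> l"
            proof (rule contrapos_np)
              assume "\<not> 2 \<le> l"
              then have "l = 1" using l0 by simp
              then show "j = i" using j(1) i l_def by simp
            qed
            ultimately show False using h2h j d nf by auto
          qed
          then show ?thesis using d nf by (simp add: T_def)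
        qed
      qed
    qed simp
    then show ?thesis by blast
  next
    assume pr: "\<forall>i<length as. lbl (as ! i) = Ap \<longrightarrow> \<not> fwd vs as i"
    define \<sigma> where "\<sigma> i = (lbl (as ! (i mod l)) = Ad \<and> \<not> fwd vs as (i mod l))" for i
    have "chainB vs as \<sigma>"
    proof (rule chainB_I[where P = "\<lambda>_. True"])
      show "\<sigma> (length as) = \<sigma> 0" unfolding \<sigma>_def l_def by simp
      show "0 < length as" using l0 l_def by simp
    next
      fix i assume i: "i < length as"
      show "T (lbl (as ! i)) (\<not> fwd vs as i) (\<sigma> (Suc i)) (\<sigma> i) True"
      proof (cases "lbl (as ! i) = Ap")
        case True then show ?thesis using pr i by (simp add: T_def)
      next
        case False
        then have d: "lbl (as ! i) = Ad" using lab i by auto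
        show ?thesis
        proof (cases "fwd vs as i")
          case False then show ?thesis using d i unfolding \<sigma>_def l_def by (simp add: T_def)
        next
          case nf: True
          define j where "j = (i + 1) mod l"
          have "\<not> \<sigma> (Suc i)"
          proof
            assume "\<sigma> (Suc i)"
            then have "lbl (as ! j) = Ad" "\<not> fwd vs as j" unfolding \<sigma>_def j_def by auto
            moreover have "j \<noteq> i" using \<open>\<not> fwd vs as j\<close> nf by auto
            then have "2 \<le> l"
            proof (rule contrapos_np)
              assume "\<not> 2 \<le> l"
              then have "l = 1" using l0 by simp
              then show "j = i" using i l_def unfolding j_def by simp
            qed
            ultimately show False using h2h i l_def d nf unfolding j_def by auto
          qed
          then show ?thesis using d nf by (simp add: T_def)
        qed
      qed
    qed simp
    then show ?thesis by blast
  qed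
qed

lemma nec_do:
  assumes cyc: "is_cycle C vs as" and lab: "\<forall>i<length as. lbl (as ! i) \<in> {Ad, Ao}"
    and sd: "same_dir vs as Ad" "same_dir vs as Ao"
  shows "\<exists>\<sigma>. chainF vs as \<sigma> \<or> chainB vs as \<sigma>"
proof -
  have l0: "0 < length as" using cyc_len[OF cyc] by auto
  have lab': "lbl (as ! i) = Ad \<or> lbl (as ! i) = Ao" if "i < length as" for i using lab that by auto
  consider "\<forall>i<length as. lbl (as ! i) = Ad \<longrightarrow> fwd vs as i" | "\<forall>i<length as. lbl (as ! i) = Ad \<longrightarrow> \<not> fwd vs as i"
    using sd(1) unfolding same_dir_def by blast
  then show ?thesis
  proof cases
    case 1
    from sd(2) show ?thesis unfolding same_dir_def
    proof
      assume o: "\<forall>i<length as. lbl (as ! i) = Ao \<longrightarrow> fwd vs as i"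
      have "chainF vs as (\<lambda>_. True)"
        apply (rule chainF_I[where P = "\<lambda>_. True", OF _ _ l0])
        subgoal by simp
        subgoal for i using lab'[of i] 1 o by (auto simp: T_def)
        by simp
      then show ?thesis by blast
    next
      assume o: "\<forall>i<length as. lbl (as ! i) = Ao \<longrightarrow> \<not> fwd vs as i"
      have "chainB vs as (\<lambda>_. False)"
        apply (rule chainB_I[where P = "\<lambda>_. True", OF _ _ l0])
        subgoal by simp
        subgoal for i using lab'[of i] 1 o by (auto simp: T_def)
        by simp
      then show ?thesis by blast
    qed
  next
    case 2
    from sd(2) show ?thesis unfolding same_dir_def
    proof
      assume o: "\<forall>i<length as. lbl (as ! i) = Ao \<longrightarrow> fwd vs as i"
      have "chainF vs as (\<lambda>_. False)"
        apply (rule chainF_I[where P = "\<lambda>_. True", OF _ _ l0])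
        subgoal by simp
        subgoal for i using lab'[of i] 2 o by (auto simp: T_def)
        by simp
      then show ?thesis by blast
    next
      assume o: "\<forall>i<length as. lbl (as ! i) = Ao \<longrightarrow> \<not> fwd vs as i"
      have "chainB vs as (\<lambda>_. True)"
        apply (rule chainB_I[where P = "\<lambda>_. True", OF _ _ l0])
        subgoal by simp
        subgoal for i using lab'[of i] 2 o by (auto simp: T_def)
        by simp
      then show ?thesis by blast
    qed
  qed
qed

lemma nec_op_b:
  assumes cyc: "is_cycle C vs as" and lab: "\<forall>i<length as. lbl (as ! i) \<in> {Ao, Ap}"
    and pf: "\<forall>i<length as. lbl (as ! i) = Ap \<longrightarrow> fwd vs as i"
    and pb: "p_between_rev_o vs as"
  shows "chainF vs as (\<lambda>j. \<exists>k. 1 \<le> k \<and> k \<le> length as \<and>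
      (lbl (as ! ((j + (length as - k)) mod length as)) = Ao \<and> \<not> fwd vs as ((j + (length as - k)) mod length as)) \<and>
      (\<forall>m. 1 \<le> m \<and> m < k \<longrightarrow> lbl (as ! ((j + (length as - m)) mod length as)) \<noteq> Ap))"
    (is "chainF vs as ?\<sigma>")
proof -
  define l where "l = length as"
  have l0: "0 < l" using cyc_len[OF cyc] l_def by auto
  define revO where "revO j \<longleftrightarrow> lbl (as ! j) = Ao \<and> \<not> fwd vs as j" for j
  define P where "P j k \<longleftrightarrow> 1 \<le> k \<and> k \<le> l \<and> revO ((j + (l - k)) mod l) \<and>
      (\<forall>m. 1 \<le> m \<and> m < k \<longrightarrow> lbl (as ! ((j + (l - m)) mod l)) \<noteq> Ap)" for j k
  have sig: "?\<sigma> j \<longleftrightarrow> (\<exists>k. P j k)" for j unfolding P_def revO_def l_def by simp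
  note pbr = pb[unfolded p_between_rev_o_def Let_def, folded l_def revO_def, rule_format]
  show ?thesis
  proof (rule chainF_I[where P = "\<lambda>_. True"])
    show "?\<sigma> (length as) = ?\<sigma> 0" by simp
    show "0 < length as" using l0 l_def by simp
  next
    fix i assume i: "i < length as"
    then have il: "i < l" using l_def by simp
    show "T (lbl (as ! i)) (fwd vs as i) (?\<sigma> i) (?\<sigma> (Suc i)) True"
    proof (cases "lbl (as ! i) = Ap")
      case True then show ?thesis using pf i by (simp add: T_def)
    next
      case False
      then have o: "lbl (as ! i) = Ao" using lab i by auto
      show ?thesis
      proof (cases "fwd vs as i")
        case True
        have "\<exists>k. P (Suc i) k" if "P i k" for k
        proof -
          have k: "1 \<le> k" "k \<le> l" "revO ((i + (l - k)) mod l)"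
              "\<forall>m. 1 \<le> m \<and> m < k \<longrightarrow> lbl (as ! ((i + (l - m)) mod l)) \<noteq> Ap"
            using that unfolding P_def by auto
          have "k \<noteq> l"
          proof
            assume "k = l" then have "revO i" using k(3) il by simp
            then show False using True revO_def by simp
          qed
          then have kl: "k < l" using k by simp
          have e1: "(Suc i + (l - Suc k)) mod l = (i + (l - k)) mod l"
            using kl by (simp add: Suc_diff_Suc)
          have "lbl (as ! ((Suc i + (l - m)) mod l)) \<noteq> Ap" if "1 \<le> m" "m < Suc k" for m
          proof (cases "m = 1")
            case True
            have "(Suc i + (l - m)) mod l = i" using True il l0 by simp
            then show ?thesis using False by simp
          next
            case m1: False
            have "Suc i + (l - m) = i + (l - (m - 1))" using that kl m1 by arith
            then have eq: "(Suc i + (l - m)) mod l = (i + (l - (m - 1))) mod l" by (simp only:)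
            have "1 \<le> m - 1 \<and> m - 1 < k" using that m1 by arith
            from k(4)[rule_format, OF this] show ?thesis unfolding eq .
          qed
          then have "P (Suc i) (Suc k)" unfolding P_def using k kl e1 by simp
          then show ?thesis by blast
        qed
        then have "?\<sigma> i \<longrightarrow> ?\<sigma> (Suc i)" unfolding sig by blast
        then show ?thesis using o True by (simp add: T_def)
      next
        case nf: False
        have s1: "?\<sigma> (Suc i)"
        proof -
          have "(Suc i + (l - 1)) mod l = i" using il l0 by simp
          then have "P (Suc i) 1" unfolding P_def revO_def using o nf l0 by simp
          then show ?thesis unfolding sig by blast
        qed
        have s0: "\<not> ?\<sigma> i"
        proof
          assume "?\<sigma> i"
          then have ex: "\<exists>k. P i k" unfolding sig .
          define k0 where "k0 = (LEAST k. P i k)"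
          have pk0: "P i k0" unfolding k0_def using ex by (metis LeastI)
          have mink: "\<not> P i k" if "k < k0" for k using that not_less_Least unfolding k0_def by blast
          have k: "1 \<le> k0" "k0 \<le> l" "revO ((i + (l - k0)) mod l)"
              "\<forall>m. 1 \<le> m \<and> m < k0 \<longrightarrow> lbl (as ! ((i + (l - m)) mod l)) \<noteq> Ap"
            using pk0 unfolding P_def by auto
          define i' where "i' = (i + (l - k0)) mod l"
          have i'l: "i' < l" unfolding i'_def using l0 by simp
          have e: "(i' + k') mod l = (i + (l - (k0 - k'))) mod l" if "k' \<le> k0" for k'
          proof -
            have "(i' + k') mod l = (i + (l - k0) + k') mod l" unfolding i'_def by (simp add: mod_add_left_eq)
            moreover have "i + (l - k0) + k' = i + (l - (k0 - k'))" using that k(2) by simp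
            ultimately show ?thesis by simp
          qed
          have ri: "revO ((i' + k0) mod l)" using e[of k0] il nf o unfolding revO_def by simp
          have nb: "\<not> revO ((i' + k') mod l)" if "0 < k'" "k' < k0" for k'
          proof
            assume r: "revO ((i' + k') mod l)"
            have "P i (k0 - k')" unfolding P_def using r e[of k'] that k by auto
            then show False using mink[of "k0 - k'"] that by simp
          qed
          obtain k' where k': "0 < k'" "k' < k0" "lbl (as ! ((i' + k') mod l)) = Ap"
            using pbr[of i' k0] i'l k ri nb k(3) unfolding i'_def[symmetric] by auto
          have "1 \<le> k0 - k' \<and> k0 - k' < k0" using k' by arith
          from k(4)[rule_format, OF this] have "lbl (as ! ((i + (l - (k0 - k'))) mod l)) \<noteq> Ap" .
          moreover have "(i' + k') mod l = (i + (l - (k0 - k'))) mod l" using e k' by simp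
          ultimately show False using k'(3) by simp
        qed
        show ?thesis using o nf s0 s1 by (simp add: T_def)
      qed
    qed
  qed simp
qed

lemma nec_op:
  assumes cyc: "is_cycle C vs as" and lab: "\<forall>i<length as. lbl (as ! i) \<in> {Ao, Ap}"
    and bad: "bad_cycle Ao Ap vs as"
  shows "\<exists>\<sigma>. chainF vs as \<sigma> \<or> chainB vs as \<sigma>"
proof -
  have l0: "0 < length as" using cyc_len[OF cyc] by auto
  from bad have "directed_cycle_of vs as Ao \<or>
        (has_lbl as Ap \<and> (\<forall>i < length as. lbl (as ! i) = Ap \<longrightarrow> fwd vs as i) \<and> p_between_rev_o vs as)"
    unfolding bad_cycle_def by simp
  then show ?thesis
  proof
    assume d: "directed_cycle_of vs as Ao"
    then have all: "\<forall>i<length as. lbl (as ! i) = Ao" unfolding directed_cycle_of_def by simp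
    from d have "same_dir vs as Ao" unfolding directed_cycle_of_def by simp
    then show ?thesis unfolding same_dir_def
    proof
      assume o: "\<forall>i<length as. lbl (as ! i) = Ao \<longrightarrow> fwd vs as i"
      have "chainF vs as (\<lambda>_. False)"
        apply (rule chainF_I[where P = "\<lambda>_. True", OF _ _ l0])
        subgoal by simp
        subgoal for i using all o by (auto simp: T_def)
        by simp
      then show ?thesis by blast
    next
      assume o: "\<forall>i<length as. lbl (as ! i) = Ao \<longrightarrow> \<not> fwd vs as i"
      have "chainB vs as (\<lambda>_. False)"
        apply (rule chainB_I[where P = "\<lambda>_. True", OF _ _ l0])
        subgoal by simp
        subgoal for i using all o by (auto simp: T_def)
        by simp
      then show ?thesis by blast
    qed
  next
    assume "has_lbl as Ap \<and> (\<forall>i < length as. lbl (as ! i) = Ap \<longrightarrow> fwd vs as i) \<and> p_between_rev_o vs as"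
    then show ?thesis using nec_op_b[OF cyc lab] by blast
  qed
qed

lemma nec_4:
  assumes r: "r1 \<in> {Af, As}" "r2 \<in> {Ad, Ao, Ap}"
    and cyc: "is_cycle C vs as" and lab: "\<forall>i<length as. lbl (as ! i) \<in> {r1, r2}"
    and bad: "bad_cycle r1 r2 vs as"
  shows "\<exists>\<sigma>. chainF vs as \<sigma> \<or> chainB vs as \<sigma>"
proof -
  have l0: "0 < length as" using cyc_len[OF cyc] by auto
  have lab': "lbl (as ! i) = r1 \<or> lbl (as ! i) = r2" if "i < length as" for i using lab that by auto
  have ne: "r1 \<noteq> r2" using r by auto
  from bad r have "directed_cycle_of vs as r1 \<or> (has_lbl as r2 \<and> same_dir vs as r2)"
    unfolding bad_cycle_def by auto
  then show ?thesis
  proof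
    assume d: "directed_cycle_of vs as r1"
    then have all: "\<forall>i<length as. lbl (as ! i) = r1" unfolding directed_cycle_of_def by simp
    from d have "same_dir vs as r1" unfolding directed_cycle_of_def by simp
    then show ?thesis unfolding same_dir_def
    proof
      assume o: "\<forall>i<length as. lbl (as ! i) = r1 \<longrightarrow> fwd vs as i"
      have "chainF vs as (\<lambda>_. True)" if "r1 = As"
        apply (rule chainF_I[where P = "\<lambda>_. True", OF _ _ l0])
        subgoal by simp
        subgoal for i using all o that by (auto simp: T_def)
        by simp
      moreover have "chainB vs as (\<lambda>_. False)" if "r1 = Af"
        apply (rule chainB_I[where P = "\<lambda>_. True", OF _ _ l0])
        subgoal by simp
        subgoal for i using all o that by (auto simp: T_def)
        by simp
      ultimately show ?thesis using r by blast
    next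
      assume o: "\<forall>i<length as. lbl (as ! i) = r1 \<longrightarrow> \<not> fwd vs as i"
      have "chainB vs as (\<lambda>_. True)" if "r1 = As"
        apply (rule chainB_I[where P = "\<lambda>_. True", OF _ _ l0])
        subgoal by simp
        subgoal for i using all o that by (auto simp: T_def)
        by simp
      moreover have "chainF vs as (\<lambda>_. False)" if "r1 = Af"
        apply (rule chainF_I[where P = "\<lambda>_. True", OF _ _ l0])
        subgoal by simp
        subgoal for i using all o that by (auto simp: T_def)
        by simp
      ultimately show ?thesis using r by blast
    qed
  next
    assume h: "has_lbl as r2 \<and> same_dir vs as r2"
    then obtain i0 where i0: "i0 < length as" "lbl (as ! i0) = r2" unfolding has_lbl_def by blast
    define c where "c = (r1 = Af)"
    have "chainF vs as (\<lambda>_. c)" if "\<forall>i<length as. lbl (as ! i) = r2 \<longrightarrow> fwd vs as i = (\<not> (r1 = As \<and> r2 = Ad))"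
      apply (rule chainF_I[where P = "\<lambda>i. lbl (as ! i) = r2", OF _ _ i0(1)])
      subgoal by simp
      subgoal for i using lab'[of i] that r ne unfolding c_def by (auto simp: T_def)
      using i0 by simp
    moreover have "chainB vs as (\<lambda>_. c)" if "\<forall>i<length as. lbl (as ! i) = r2 \<longrightarrow> fwd vs as i = (r1 = As \<and> r2 = Ad)"
      apply (rule chainB_I[where P = "\<lambda>i. lbl (as ! i) = r2", OF _ _ i0(1)])
      subgoal by simp
      subgoal for i using lab'[of i] that r ne unfolding c_def by (auto simp: T_def)
      using i0 by simp
    moreover have "(\<forall>i<length as. lbl (as ! i) = r2 \<longrightarrow> fwd vs as i = (\<not> (r1 = As \<and> r2 = Ad))) \<or>
                   (\<forall>i<length as. lbl (as ! i) = r2 \<longrightarrow> fwd vs as i = (r1 = As \<and> r2 = Ad))"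
      using h unfolding same_dir_def by (cases "r1 = As \<and> r2 = Ad") auto
    ultimately show ?thesis by blast
  qed
qed

lemma labels:
  assumes "instance_of r1 r2 C" "is_cycle C vs as"
  shows "\<forall>i<length as. lbl (as ! i) \<in> {r1, r2}"
proof (intro allI impI)
  fix i assume "i < length as"
  then have "as ! i \<in> C" using assms(2) unfolding is_cycle_def by auto
  then show "lbl (as ! i) \<in> {r1, r2}" using assms(1) unfolding instance_of_def lbl_def by auto
qed

lemma necessity:
  assumes cas: "(r1, r2) \<in> {(Ad, Ap), (Ad, Ao), (Ao, Ap)} \<union> ({Af, As} \<times> {Ad, Ao, Ap})"
    and inst: "instance_of r1 r2 C" and cyc: "is_cycle C vs as" and bad: "bad_cycle r1 r2 vs as"
  shows "\<exists>\<sigma>. chainF vs as \<sigma> \<or> chainB vs as \<sigma>"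
proof -
  note lab = labels[OF inst cyc]
  consider "r1 = Ad" "r2 = Ap" | "r1 = Ad" "r2 = Ao" | "r1 = Ao" "r2 = Ap" | "r1 \<in> {Af, As}" "r2 \<in> {Ad, Ao, Ap}"
    using cas by auto
  then show ?thesis
  proof cases
    case 1
    then show ?thesis using nec_dp[OF cyc] lab bad unfolding bad_cycle_def by simp
  next
    case 2
    then show ?thesis using nec_do[OF cyc] lab bad unfolding bad_cycle_def by simp
  next
    case 3
    then show ?thesis using nec_op[OF cyc] lab bad by simp
  next
    case 4
    then show ?thesis using nec_4[OF 4 cyc lab bad] by simp
  qed
qed

lemma sat_no_bad:
  assumes cas: "(r1, r2) \<in> {(Ad, Ap), (Ad, Ao), (Ao, Ap)} \<union> ({Af, As} \<times> {Ad, Ao, Ap})"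
    and inst: "instance_of r1 r2 C" and sat: "satisfiable C"
  shows "\<not> (\<exists>vs as. is_cycle C vs as \<and> bad_cycle r1 r2 vs as)"
  using necessity[OF cas inst] potential[OF sat] by blast

lemma sig_mod: "\<sigma> l = \<sigma> 0 \<Longrightarrow> i < l \<Longrightarrow> \<sigma> ((i + 1) mod l) = \<sigma> (Suc i)"
proof (cases "Suc i < l")
  case True then show ?thesis by simp
next
  case False
  assume "\<sigma> l = \<sigma> 0" "i < l"
  then have "Suc i = l" using False by simp
  then show ?thesis using \<open>\<sigma> l = \<sigma> 0\<close> by simp
qed

lemma const_up:
  assumes m: "\<forall>i<l. \<sigma> i \<longrightarrow> \<sigma> (Suc i)"
  shows "i \<le> j \<Longrightarrow> j \<le> l \<Longrightarrow> \<sigma> i \<Longrightarrow> \<sigma> j"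
proof (induction j)
  case 0 then show ?case by simp
next
  case (Suc j)
  show ?case
  proof (cases "i = Suc j")
    case True then show ?thesis using Suc.prems by simp
  next
    case False
    then have "i \<le> j" "j < l" using Suc.prems by auto
    then have "\<sigma> j" using Suc by simp
    then show ?thesis using m[rule_format, OF \<open>j < l\<close>] by simp
  qed
qed

lemma const_chain:
  assumes "\<forall>i<l. \<sigma> i \<longrightarrow> \<sigma> (Suc i)" "\<sigma> l = \<sigma> 0" "i \<le> l"
  shows "\<sigma> i = \<sigma> 0"
proof (cases "\<sigma> 0")
  case True then show ?thesis using const_up[OF assms(1), of 0 i] assms(3) by simp
next
  case False
  have "\<not> \<sigma> i"
  proof
    assume "\<sigma> i" then have "\<sigma> l" using const_up[OF assms(1), of i l] assms(3) by simp
    then show False using False assms(2) by simp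
  qed
  then show ?thesis using False by simp
qed

lemma suf_len1:
  assumes cyc: "is_cycle C vs as" and l1: "length as = 1"
    and lab: "\<forall>i<length as. lbl (as ! i) \<in> {r1, r2}"
    and cas: "(r1, r2) \<in> {(Ad, Ap), (Ad, Ao), (Ao, Ap)} \<union> ({Af, As} \<times> {Ad, Ao, Ap})"
  shows "bad_cycle r1 r2 vs as"
proof -
  have lv: "length vs = 1" using cyc_len[OF cyc] l1 by simp
  have "joins (as ! 0) (vs ! 0) (vs ! 0)" using cyc lv unfolding is_cycle_def by auto
  then have f0: "fwd vs as 0" unfolding joins_def fwd_def lv by auto
  have fa: "\<forall>i<length as. fwd vs as i" using f0 l1 by auto
  have allr: "\<forall>i<length as. lbl (as ! i) = lbl (as ! 0)" using l1 by auto
  have l0: "lbl (as ! 0) \<in> {r1, r2}" using lab l1 by auto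
  have nrev: "\<not> (lbl (as ! j) = Ao \<and> \<not> fwd vs as j)" if "j < length as" for j using fa that by auto
  have pb: "p_between_rev_o vs as" unfolding p_between_rev_o_def Let_def using nrev by auto
  have hl: "has_lbl as (lbl (as ! 0))" unfolding has_lbl_def using l1 by auto
  have sd: "same_dir vs as r" for r unfolding same_dir_def using fa by blast
  have nh: "\<not> head_to_head vs as r" for r unfolding head_to_head_def using l1 by simp
  have dc: "directed_cycle_of vs as (lbl (as ! 0))" unfolding directed_cycle_of_def using allr sd by blast
  have pf: "\<forall>i<length as. lbl (as ! i) = Ap \<longrightarrow> fwd vs as i" using fa by blast
  consider "r1 = Ad" "r2 = Ap" | "r1 = Ad" "r2 = Ao" | "r1 = Ao" "r2 = Ap" | "r1 \<noteq> Ad" "r1 \<noteq> Ao" "r1 \<in> {Af, As}" "r2 \<in> {Ad, Ao, Ap}"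
    using cas by auto
  then show ?thesis
  proof cases
    case 1 then show ?thesis unfolding bad_cycle_def using sd nh by simp
  next
    case 2 then show ?thesis unfolding bad_cycle_def using sd by simp
  next
    case 3
    then have "lbl (as ! 0) = Ao \<or> lbl (as ! 0) = Ap" using l0 by simp
    then show ?thesis unfolding bad_cycle_def using 3 dc hl pf pb by auto
  next
    case 4
    then have "lbl (as ! 0) = r1 \<or> lbl (as ! 0) = r2" using l0 by simp
    then have "directed_cycle_of vs as r1 \<or> (has_lbl as r2 \<and> same_dir vs as r2)" using dc hl sd by auto
    then show ?thesis unfolding bad_cycle_def using 4 by simp
  qed
qed

lemma TL_Ap: "T Ap f s t st \<Longrightarrow> f" by (simp add: T_def)
lemma TL_mono: "T r f s t st \<Longrightarrow> r \<noteq> Ap \<Longrightarrow> s \<Longrightarrow> t"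
  by (cases r; cases f) (auto simp: T_def)
lemma TL_Ad_T: "T Ad True s t st \<Longrightarrow> t" by (simp add: T_def)
lemma TL_Ad_F: "T Ad False s t st \<Longrightarrow> \<not> s" by (simp add: T_def)
lemma TL_Ao_F: "T Ao False s t st \<Longrightarrow> \<not> s \<and> t" by (simp add: T_def)
lemma TL_Ad_c: "T Ad f c c st \<Longrightarrow> f = c" by (cases f) (auto simp: T_def)
lemma TL_Ao_c: "T Ao f c c st \<Longrightarrow> f" by (cases f) (auto simp: T_def)
lemma TL_As_c: "T As f c c st \<Longrightarrow> (\<not> c \<and> \<not> st) \<or> (c \<and> f)" by (cases f; cases c) (auto simp: T_def)
lemma TL_Af_c: "T Af f c c st \<Longrightarrow> (c \<and> \<not> st) \<or> (\<not> c \<and> \<not> f)" by (cases f; cases c) (auto simp: T_def)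

lemma chainF_step: "chainF vs as \<sigma> \<Longrightarrow> i < length as \<Longrightarrow> \<exists>st. T (lbl (as ! i)) (fwd vs as i) (\<sigma> i) (\<sigma> (Suc i)) st"
  unfolding chainF_def by blast

lemma chain_mono:
  assumes ch: "chainF vs as \<sigma>" and np: "\<forall>i<length as. lbl (as ! i) \<noteq> Ap"
  shows "\<forall>i<length as. \<sigma> i \<longrightarrow> \<sigma> (Suc i)"
proof (intro allI impI)
  fix i assume i: "i < length as" "\<sigma> i"
  from chainF_step[OF ch i(1)] obtain s1 where s1: "T (lbl (as ! i)) (fwd vs as i) (\<sigma> i) (\<sigma> (Suc i)) s1" ..
  have "lbl (as ! i) \<noteq> Ap" using np i(1) by simp
  show "\<sigma> (Suc i)" by (rule TL_mono[OF s1 \<open>lbl (as ! i) \<noteq> Ap\<close> i(2)])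
qed

lemma chain_constT:
  assumes ch: "chainF vs as \<sigma>" and np: "\<forall>i<length as. lbl (as ! i) \<noteq> Ap"
  shows "\<forall>i<length as. \<exists>st. T (lbl (as ! i)) (fwd vs as i) (\<sigma> 0) (\<sigma> 0) st"
    and "\<exists>i<length as. T (lbl (as ! i)) (fwd vs as i) (\<sigma> 0) (\<sigma> 0) True"
proof -
  have sl: "\<sigma> (length as) = \<sigma> 0" using ch unfolding chainF_def by simp
  have mono: "\<forall>i<length as. \<sigma> i \<longrightarrow> \<sigma> (Suc i)" by (rule chain_mono[OF ch np])
  have c: "\<sigma> i = \<sigma> 0" if hi: "i \<le> length as" for i
    by (rule const_chain[where \<sigma> = \<sigma> and l = "length as" and i = i]) (rule mono, rule sl, rule hi)
  show "\<forall>i<length as. \<exists>st. T (lbl (as ! i)) (fwd vs as i) (\<sigma> 0) (\<sigma> 0) st"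
  proof (intro allI impI)
    fix i assume i: "i < length as"
    have "\<sigma> i = \<sigma> 0" "\<sigma> (Suc i) = \<sigma> 0" using c[of i] c[of "Suc i"] i by simp_all
    then show "\<exists>st. T (lbl (as ! i)) (fwd vs as i) (\<sigma> 0) (\<sigma> 0) st" using chainF_step[OF ch i] by simp
  qed
  from ch obtain i where i: "i < length as" "T (lbl (as ! i)) (fwd vs as i) (\<sigma> i) (\<sigma> (Suc i)) True"
    unfolding chainF_def by (elim conjE exE) simp
  have "\<sigma> i = \<sigma> 0" "\<sigma> (Suc i) = \<sigma> 0" using c[of i] c[of "Suc i"] i by simp_all
  then show "\<exists>i<length as. T (lbl (as ! i)) (fwd vs as i) (\<sigma> 0) (\<sigma> 0) True" using i by auto
qed

lemma suf_dp:
  assumes lab: "\<forall>i<length as. lbl (as ! i) \<in> {Ad, Ap}" and ch: "chainF vs as \<sigma>"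
  shows "same_dir vs as Ap \<and> \<not> head_to_head vs as Ad"
proof -
  define l where "l = length as"
  have sl: "\<sigma> l = \<sigma> 0" using ch unfolding chainF_def l_def by simp
  have pf: "fwd vs as i" if hi: "i < l" "lbl (as ! i) = Ap" for i
  proof -
    from chainF_step[OF ch, of i] hi l_def obtain s1 where "T (lbl (as ! i)) (fwd vs as i) (\<sigma> i) (\<sigma> (Suc i)) s1" by auto
    then have "T Ap (fwd vs as i) (\<sigma> i) (\<sigma> (Suc i)) s1" using hi by simp
    then show ?thesis by (rule TL_Ap)
  qed
  have "same_dir vs as Ap" unfolding same_dir_def using pf l_def by auto
  moreover have "\<not> head_to_head vs as Ad"
  proof
    assume "head_to_head vs as Ad"
    then obtain i where i: "i < l" "lbl (as ! i) = Ad" "lbl (as ! ((i + 1) mod l)) = Ad"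
      "fwd vs as i" "\<not> fwd vs as ((i + 1) mod l)" unfolding head_to_head_def l_def by blast
    from chainF_step[OF ch, of i] i l_def obtain s1 where "T (lbl (as ! i)) (fwd vs as i) (\<sigma> i) (\<sigma> (Suc i)) s1" by auto
    then have "T Ad True (\<sigma> i) (\<sigma> (Suc i)) s1" using i by simp
    then have a: "\<sigma> (Suc i)" by (rule TL_Ad_T)
    have "(i + 1) mod l < l" using i by simp
    then obtain s2 where "T (lbl (as ! ((i + 1) mod l))) (fwd vs as ((i + 1) mod l)) (\<sigma> ((i + 1) mod l)) (\<sigma> (Suc ((i + 1) mod l))) s2"
      using chainF_step[OF ch, of "(i + 1) mod l"] l_def by auto
    then have "T Ad False (\<sigma> ((i + 1) mod l)) (\<sigma> (Suc ((i + 1) mod l))) s2" using i by simp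
    then have "\<not> \<sigma> ((i + 1) mod l)" by (rule TL_Ad_F)
    then show False using a sig_mod[OF sl i(1)] by simp
  qed
  ultimately show ?thesis by simp
qed

lemma suf_do:
  assumes lab: "\<forall>i<length as. lbl (as ! i) \<in> {Ad, Ao}" and ch: "chainF vs as \<sigma>"
  shows "same_dir vs as Ad \<and> same_dir vs as Ao"
proof -
  have np: "\<forall>i<length as. lbl (as ! i) \<noteq> Ap" using lab by auto
  note ct = chain_constT(1)[OF ch np]
  have pt: "(lbl (as ! i) = Ad \<longrightarrow> fwd vs as i = \<sigma> 0) \<and> (lbl (as ! i) = Ao \<longrightarrow> fwd vs as i)" if hi: "i < length as" for i
  proof -
    from ct hi obtain s1 where s1: "T (lbl (as ! i)) (fwd vs as i) (\<sigma> 0) (\<sigma> 0) s1" by auto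
    show ?thesis
    proof (intro conjI impI)
      assume "lbl (as ! i) = Ad" then show "fwd vs as i = \<sigma> 0" using s1 TL_Ad_c by simp
    next
      assume "lbl (as ! i) = Ao" then show "fwd vs as i" using s1 TL_Ao_c by simp
    qed
  qed
  show ?thesis unfolding same_dir_def using pt by (cases "\<sigma> 0") auto
qed

lemma suf_op:
  assumes lab: "\<forall>i<length as. lbl (as ! i) \<in> {Ao, Ap}" and ch: "chainF vs as \<sigma>"
  shows "bad_cycle Ao Ap vs as"
proof -
  define l where "l = length as"
  have sl: "\<sigma> l = \<sigma> 0" using ch unfolding chainF_def l_def by simp
  from ch obtain i0 where "i0 < l" unfolding chainF_def l_def by auto
  then have l0: "0 < l" by simp
  have lab': "lbl (as ! i) = Ao \<or> lbl (as ! i) = Ap" if "i < l" for i using lab that l_def by auto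
  show ?thesis
  proof (cases "has_lbl as Ap")
    case True
    have pf1: "fwd vs as i" if hi: "i < l" "lbl (as ! i) = Ap" for i
    proof -
      from chainF_step[OF ch, of i] hi l_def obtain s1 where "T (lbl (as ! i)) (fwd vs as i) (\<sigma> i) (\<sigma> (Suc i)) s1" by auto
      then have "T Ap (fwd vs as i) (\<sigma> i) (\<sigma> (Suc i)) s1" using hi by simp
      then show ?thesis by (rule TL_Ap)
    qed
    then have pf: "\<forall>i<l. lbl (as ! i) = Ap \<longrightarrow> fwd vs as i" by auto
    have stm: "\<exists>st. T (lbl (as ! (j mod l))) (fwd vs as (j mod l)) (\<sigma> (j mod l)) (\<sigma> (Suc j mod l)) st" for j
    proof -
      have jl: "j mod l < l" using l0 by simp
      have "\<sigma> (Suc j mod l) = \<sigma> (Suc (j mod l))" using sig_mod[OF sl jl] by (simp add: mod_Suc_eq)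
      then show ?thesis using chainF_step[OF ch, of "j mod l"] jl l_def by simp
    qed
    have pb: "p_between_rev_o vs as"
      unfolding p_between_rev_o_def Let_def l_def[symmetric]
    proof (intro allI impI)
      fix i d
      assume h: "i < l" "0 < d \<and> d \<le> l \<and> (lbl (as ! i) = Ao \<and> \<not> fwd vs as i) \<and>
          (lbl (as ! ((i + d) mod l)) = Ao \<and> \<not> fwd vs as ((i + d) mod l)) \<and>
          (\<forall>k. 0 < k \<and> k < d \<longrightarrow> \<not> (lbl (as ! ((i + k) mod l)) = Ao \<and> \<not> fwd vs as ((i + k) mod l)))"
      have d0: "0 < d" "d \<le> l" using h(2) by simp_all
      have ri: "lbl (as ! i) = Ao" "\<not> fwd vs as i" using h(2) by simp_all
      have rd: "lbl (as ! ((i + d) mod l)) = Ao" "\<not> fwd vs as ((i + d) mod l)" using h(2) by simp_all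
      have nb: "\<not> (lbl (as ! ((i + k) mod l)) = Ao \<and> \<not> fwd vs as ((i + k) mod l))" if "0 < k" "k < d" for k
        using h(2) that by blast
      show "\<exists>k. 0 < k \<and> k < d \<and> lbl (as ! ((i + k) mod l)) = Ap"
      proof (rule ccontr)
        assume np: "\<not> ?thesis"
        have of: "lbl (as ! ((i + k) mod l)) = Ao \<and> fwd vs as ((i + k) mod l)" if hk: "0 < k" "k < d" for k
        proof -
          have "lbl (as ! ((i + k) mod l)) \<noteq> Ap" using np hk by blast
          moreover have "(i + k) mod l < l" using l0 by simp
          then have "lbl (as ! ((i + k) mod l)) = Ao \<or> lbl (as ! ((i + k) mod l)) = Ap" using lab' by blast
          ultimately show ?thesis using nb[OF hk] by blast
        qed
        have up: "\<sigma> ((i + k) mod l)" if "1 \<le> k" "k \<le> d" for k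
          using that
        proof (induction k)
          case 0 then show ?case by simp
        next
          case (Suc k)
          show ?case
          proof (cases "k = 0")
            case True
            from stm[of i] obtain s1 where "T (lbl (as ! (i mod l))) (fwd vs as (i mod l)) (\<sigma> (i mod l)) (\<sigma> (Suc i mod l)) s1" ..
            then have "T Ao False (\<sigma> i) (\<sigma> (Suc i mod l)) s1" using ri h(1) by simp
            then show ?thesis using True by (simp add: T_def)
          next
            case False
            then have a: "\<sigma> ((i + k) mod l)" using Suc by simp
            have b: "lbl (as ! ((i + k) mod l)) = Ao \<and> fwd vs as ((i + k) mod l)"
              using of[of k] False Suc.prems by simp
            from stm[of "i + k"] obtain s1 where "T (lbl (as ! ((i + k) mod l))) (fwd vs as ((i + k) mod l)) (\<sigma> ((i + k) mod l)) (\<sigma> (Suc (i + k) mod l)) s1" ..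
            then show ?thesis using a b by (simp add: T_def)
          qed
        qed
        have a: "\<sigma> ((i + d) mod l)" using up[of d] d0 by simp
        from stm[of "i + d"] obtain s1 where "T (lbl (as ! ((i + d) mod l))) (fwd vs as ((i + d) mod l)) (\<sigma> ((i + d) mod l)) (\<sigma> (Suc (i + d) mod l)) s1" ..
        then show False using a rd by (simp add: T_def)
      qed
    qed
    show ?thesis unfolding bad_cycle_def using True pf pb l_def by simp
  next
    case False
    then have allo: "\<forall>i<l. lbl (as ! i) = Ao" using lab' unfolding has_lbl_def l_def by blast
    then have np: "\<forall>i<length as. lbl (as ! i) \<noteq> Ap" using l_def by simp
    note ct = chain_constT(1)[OF ch np]
    have "fwd vs as i" if hi: "i < l" for i
    proof -
      from ct hi l_def obtain s1 where "T (lbl (as ! i)) (fwd vs as i) (\<sigma> 0) (\<sigma> 0) s1" by auto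
      then have "T Ao (fwd vs as i) (\<sigma> 0) (\<sigma> 0) s1" using allo hi by simp
      then show ?thesis by (rule TL_Ao_c)
    qed
    then have "directed_cycle_of vs as Ao" unfolding directed_cycle_of_def same_dir_def using allo l_def by auto
    then show ?thesis unfolding bad_cycle_def by simp
  qed
qed

lemma suf_4:
  assumes r: "r1 \<in> {Af, As}" "r2 \<in> {Ad, Ao, Ap}"
    and lab: "\<forall>i<length as. lbl (as ! i) \<in> {r1, r2}" and ch: "chainF vs as \<sigma>"
  shows "bad_cycle r1 r2 vs as"
proof -
  have goal: "directed_cycle_of vs as r1 \<or> (has_lbl as r2 \<and> same_dir vs as r2)"
  proof (cases "r2 = Ap \<and> has_lbl as Ap")
    case True
    have pf: "fwd vs as i" if hi: "i < length as" "lbl (as ! i) = Ap" for i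
    proof -
      from chainF_step[OF ch, of i] hi obtain s1 where "T (lbl (as ! i)) (fwd vs as i) (\<sigma> i) (\<sigma> (Suc i)) s1" by auto
      then have "T Ap (fwd vs as i) (\<sigma> i) (\<sigma> (Suc i)) s1" using hi by simp
      then show ?thesis by (rule TL_Ap)
    qed
    then have "same_dir vs as Ap" unfolding same_dir_def by auto
    then show ?thesis using True by simp
  next
    case False
    have np: "\<forall>i<length as. lbl (as ! i) \<noteq> Ap"
    proof (intro allI impI)
      fix i assume i: "i < length as"
      show "lbl (as ! i) \<noteq> Ap"
      proof
        assume "lbl (as ! i) = Ap"
        then have "r2 = Ap" "has_lbl as Ap" using lab r i unfolding has_lbl_def by auto
        then show False using False by simp
      qed
    qed
    define c where "c = \<sigma> 0"
    have ct: "\<forall>i<length as. \<exists>st. T (lbl (as ! i)) (fwd vs as i) c c st" using chain_constT(1)[OF ch np] c_def by simp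
    have cs: "\<exists>i<length as. T (lbl (as ! i)) (fwd vs as i) c c True" using chain_constT(2)[OF ch np] c_def by simp
    have pt: "(lbl (as ! i) = As \<longrightarrow> (c \<longrightarrow> fwd vs as i)) \<and> (lbl (as ! i) = Af \<longrightarrow> (\<not> c \<longrightarrow> \<not> fwd vs as i)) \<and>
              (lbl (as ! i) = Ad \<longrightarrow> fwd vs as i = c) \<and> (lbl (as ! i) = Ao \<longrightarrow> fwd vs as i)" if hi: "i < length as" for i
    proof -
      from ct hi obtain s1 where s1: "T (lbl (as ! i)) (fwd vs as i) c c s1" by auto
      show ?thesis
      proof (intro conjI impI)
        assume "lbl (as ! i) = As" "c" then show "fwd vs as i" using TL_As_c[of "fwd vs as i" c s1] s1 by simp
      next
        assume "lbl (as ! i) = Af" "\<not> c" then show "\<not> fwd vs as i" using TL_Af_c[of "fwd vs as i" c s1] s1 by simp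
      next
        assume "lbl (as ! i) = Ad" then show "fwd vs as i = c" using TL_Ad_c[of "fwd vs as i" c s1] s1 by simp
      next
        assume "lbl (as ! i) = Ao" then show "fwd vs as i" using TL_Ao_c[of "fwd vs as i" c s1] s1 by simp
      qed
    qed
    obtain i0 where i0: "i0 < length as" "T (lbl (as ! i0)) (fwd vs as i0) c c True" using cs by blast
    have sA: "lbl (as ! i0) = As \<longrightarrow> c" using TL_As_c[of "fwd vs as i0" c True] i0(2) by auto
    have sF: "lbl (as ! i0) = Af \<longrightarrow> \<not> c" using TL_Af_c[of "fwd vs as i0" c True] i0(2) by auto
    have l2: "lbl (as ! i) = r1 \<or> lbl (as ! i) = r2" if "i < length as" for i using lab that by auto
    have r2n: "r2 \<noteq> Ap \<or> \<not> has_lbl as Ap" using False by blast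
    consider "r1 = As" | "r1 = Af" using r by auto
    then show ?thesis
    proof cases
      case 1
      show ?thesis
      proof (cases c)
        case True
        have allf: "\<forall>i<length as. fwd vs as i"
        proof (intro allI impI)
          fix i assume i: "i < length as"
          have "lbl (as ! i) \<noteq> Ap" using np i by simp
          then show "fwd vs as i" using pt[OF i] l2[OF i] r True 1 by auto
        qed
        show ?thesis
        proof (cases "has_lbl as r2")
          case True then show ?thesis using allf unfolding same_dir_def by simp
        next
          case False
          then have "\<forall>i<length as. lbl (as ! i) = r1" using l2 unfolding has_lbl_def by blast
          then show ?thesis using allf unfolding directed_cycle_of_def same_dir_def by simp
        qed
      next
        case False
        have "lbl (as ! i0) = r2" using sA False 1 l2[OF i0(1)] by auto
        then have h: "has_lbl as r2" using i0(1) unfolding has_lbl_def by blast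
        have "r2 \<noteq> Ap" using np i0(1) \<open>lbl (as ! i0) = r2\<close> by auto
        then have "r2 = Ad \<or> r2 = Ao" using r by auto
        then have "same_dir vs as r2" unfolding same_dir_def using pt False by auto
        then show ?thesis using h by simp
      qed
    next
      case 2
      show ?thesis
      proof (cases c)
        case True
        have "lbl (as ! i0) = r2" using sF True 2 l2[OF i0(1)] by auto
        then have h: "has_lbl as r2" using i0(1) unfolding has_lbl_def by blast
        have "r2 \<noteq> Ap" using np i0(1) \<open>lbl (as ! i0) = r2\<close> by auto
        then have "r2 = Ad \<or> r2 = Ao" using r by auto
        then have "same_dir vs as r2" unfolding same_dir_def using pt True by auto
        then show ?thesis using h by simp
      next
        case False
        show ?thesis
        proof (cases "has_lbl as r2")
          case True
          have "r2 \<noteq> Ap" using np True unfolding has_lbl_def by auto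
          then have "r2 = Ad \<or> r2 = Ao" using r by auto
          then have "same_dir vs as r2" unfolding same_dir_def using pt False by auto
          then show ?thesis using True by simp
        next
          case nh: False
          then have all1: "\<forall>i<length as. lbl (as ! i) = r1" using l2 unfolding has_lbl_def by blast
          then have "\<forall>i<length as. \<not> fwd vs as i" using pt False 2 by auto
          then show ?thesis using all1 unfolding directed_cycle_of_def same_dir_def by simp
        qed
      qed
    qed
  qed
  have "r1 \<noteq> Ad" "r1 \<noteq> Ao" using r by auto
  then show ?thesis unfolding bad_cycle_def using goal r by simp
qed

lemma sufficiency:
  assumes cas: "(r1, r2) \<in> {(Ad, Ap), (Ad, Ao), (Ao, Ap)} \<union> ({Af, As} \<times> {Ad, Ao, Ap})"
    and inst: "instance_of r1 r2 C" and ns: "\<not> satisfiable C"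
  shows "\<exists>vs as. is_cycle C vs as \<and> bad_cycle r1 r2 vs as"
proof -
  have fin: "finite C" using inst unfolding instance_of_def by simp
  obtain l0 n0 a0 where "walk C l0 n0 a0" using no_walk_sat[OF fin] ns by blast
  then obtain l n a where w: "walk C l n a" and m: "\<forall>l' n' a'. walk C l' n' a' \<longrightarrow> l \<le> l'"
    using min_walk_exists by blast
  define vs where "vs = map (\<lambda>i. fst (n i)) [0..<l]"
  define as where "as = map a [0..<l]"
  have mc: "is_cycle C vs as \<and> (2 \<le> l \<longrightarrow>
     (\<forall>i<l. \<exists>st. T (lbl (as ! i)) (fwd vs as i) (snd (n i)) (snd (n (Suc i))) st) \<and>
     (\<exists>i<l. T (lbl (as ! i)) (fwd vs as i) (snd (n i)) (snd (n (Suc i))) True))"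
    using min_walk_cycle[OF w m] unfolding vs_def as_def by simp
  have cyc: "is_cycle C vs as" using mc by simp
  have la: "length as = l" unfolding as_def by simp
  have l0: "0 < l" using w unfolding walk_def by simp
  note lab = labels[OF inst cyc]
  show ?thesis
  proof (cases "l = 1")
    case True
    then show ?thesis using suf_len1[OF cyc _ lab cas] la cyc by auto
  next
    case False
    then have l2: "2 \<le> l" using l0 by simp
    have nl: "n l = n 0" using w unfolding walk_def by simp
    have ch: "chainF vs as (\<lambda>i. snd (n i))" unfolding chainF_def la using mc l2 nl by simp
    consider "r1 = Ad" "r2 = Ap" | "r1 = Ad" "r2 = Ao" | "r1 = Ao" "r2 = Ap" | "r1 \<in> {Af, As}" "r2 \<in> {Ad, Ao, Ap}"
      using cas by auto
    then have "bad_cycle r1 r2 vs as"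
    proof cases
      case 1 then show ?thesis using suf_dp[OF _ ch] lab unfolding bad_cycle_def by simp
    next
      case 2 then show ?thesis using suf_do[OF _ ch] lab unfolding bad_cycle_def by simp
    next
      case 3 then show ?thesis using suf_op[OF _ ch] lab by simp
    next
      case 4 then show ?thesis using suf_4[OF 4 lab ch] by simp
    qed
    then show ?thesis using cyc by blast
  qed
qed

theorem mainTheorem5:
  fixes r1 r2 :: allen and C :: "'v constr set"
  assumes "(r1, r2) \<in> {(Ad, Ap), (Ad, Ao), (Ao, Ap)} \<union> ({Af, As} \<times> {Ad, Ao, Ap})"
    and "instance_of r1 r2 C"
  shows "satisfiable C \<longleftrightarrow> \<not> (\<exists>vs as. is_cycle C vs as \<and> bad_cycle r1 r2 vs as)"
  using sat_no_bad[OF assms] sufficiency[OF assms] by blast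

end
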